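(* Let $n$ be a positive integer and let $a,b,c,\alpha$ be positive integers such that ${\alpha+n\choose n}+a=b+c$ and $a,b,c<{\alpha+n\choose n}$. Then \[{\alpha+n\choose n}^{<n>}+a^{<n>}\leq b^{<n>}+c^{<n>}.\] Moreover, if ${\alpha+n\choose n}^{<n>}+a^{<n>}=b^{<n>}+c^{<n>}$, then \[\Big\{{\alpha+n\choose n}^{<n>}\Big\}^{<n>}+\{a^{<n>}\}^{<n>}=\{b^{<n>}\}^{<n>}+\{c^{<n>}\}^{<n>}.\]
   Context: For positive integers $n,h$, $h$ can be written uniquely in the form ($n$th binomial representation) $h={h(n)+n\choose n}+{h(n-1)+n-1\choose n-1}+\dots+{h(i)+i\choose i}$ with $h(n)\geq h(n-1)\geq\dots\geq h(i)\geq 0$ and $i\geq 1$. Using this representation define $h^{<n>}={h(n)+n+1\choose n}+\dots+{h(i)+i+1\choose i}$. Iterates such as $\{h^{<n>}\}^{<n>}$ mean applying this operation (with the $n$th binomial representation of $h^{<n>}$) again. *)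

theory Defs
  imports Main
begin

definition binrep :: "nat \<Rightarrow> nat \<Rightarrow> nat \<Rightarrow> (nat \<Rightarrow> nat) \<Rightarrow> bool" where
  "binrep n h i f \<longleftrightarrow> 1 \<le> i \<and> i \<le> n \<and> (\<forall>j\<in>{i..<n}. f j \<le> f (Suc j)) \<and>
     h = (\<Sum>j=i..n. (f j + j) choose j)"

definition mac_up :: "nat \<Rightarrow> nat \<Rightarrow> nat" where
  "mac_up n h = (THE v. \<exists>i f. binrep n h i f \<and> v = (\<Sum>j=i..n. (f j + j + 1) choose j))"

end

theory Submission
  imports Defs
begin

definition tp :: "nat \<Rightarrow> nat \<Rightarrow> nat" where
  "tp p h = (LEAST m. h < Suc m choose p)"

lemma choose_ge_self: "Suc m \<le> (m + Suc p) choose Suc p"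
proof (induction m)
  case 0 then show ?case by simp
next
  case (Suc m)
  have "(Suc m + Suc p) choose Suc p = ((m + Suc p) choose p) + ((m + Suc p) choose Suc p)"
    by simp
  moreover have "(m + Suc p) choose p \<ge> 1" by (simp add: Suc_leI)
  ultimately show ?case using Suc by linarith
qed

lemma tp_props:
  assumes "p \<ge> 1"
  shows "tp p h choose p \<le> h \<and> h < Suc (tp p h) choose p"
proof -
  obtain q where q: "p = Suc q" using assms by (cases p) auto
  have ex: "h < Suc (h + q) choose p"
    using choose_ge_self[of h q] q by simp
  have 1: "h < Suc (tp p h) choose p"
    unfolding tp_def by (rule LeastI[of _ "h + q"]) (rule ex)
  have 2: "tp p h choose p \<le> h"
  proof (cases "tp p h")
    case 0 then show ?thesis using q by simp
  next
    case (Suc m')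
    have "m' < tp p h" using Suc by simp
    then have "\<not> h < Suc m' choose p" unfolding tp_def using not_less_Least by blast
    then show ?thesis using Suc by simp
  qed
  show ?thesis using 1 2 by simp
qed

lemma tp_unique:
  assumes "m choose p \<le> h" "h < Suc m choose p"
  shows "tp p h = m"
proof -
  have le: "tp p h \<le> m" unfolding tp_def by (rule Least_le) (rule assms(2))
  show ?thesis
  proof (rule ccontr)
    assume "tp p h \<noteq> m"
    then have "Suc (tp p h) \<le> m" using le by simp
    then have "Suc (tp p h) choose p \<le> m choose p" by (rule binomial_right_mono)
    moreover have "h < Suc (tp p h) choose p"
      unfolding tp_def by (rule LeastI[of _ m]) (rule assms(2))
    ultimately show False using assms(1) by simp
  qed
qed

fun rep :: "(nat \<Rightarrow> nat \<Rightarrow> nat) \<Rightarrow> nat \<Rightarrow> nat \<Rightarrow> nat" where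
  "rep \<phi> 0 h = 0"
| "rep \<phi> (Suc p) h = (if h = 0 then 0 else
      \<phi> (tp (Suc p) h) (Suc p) + rep \<phi> p (h - (tp (Suc p) h choose Suc p)))"

lemma rep_zero [simp]: "rep \<phi> p 0 = 0"
  by (cases p) auto

lemma decomp:
  assumes "0 < h"
  obtains m r where "Suc p \<le> m" "r < m choose p" "h = (m choose Suc p) + r"
proof -
  let ?m = "tp (Suc p) h"
  have t: "?m choose Suc p \<le> h" "h < Suc ?m choose Suc p" using tp_props[of "Suc p" h] by auto
  have "Suc p \<le> ?m"
  proof (rule ccontr)
    assume "\<not> Suc p \<le> ?m"
    then have "Suc ?m \<le> Suc p" by simp
    then have "Suc ?m choose Suc p \<le> 1"
      by (metis binomial_eq_0 binomial_n_n le_neq_implies_less less_imp_le_nat nat_le_linear zero_le)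
    then show False using t assms by simp
  qed
  moreover have "h - (?m choose Suc p) < ?m choose p" using t by simp
  moreover have "h = (?m choose Suc p) + (h - (?m choose Suc p))" using t by simp
  ultimately show ?thesis using that by blast
qed

lemma rep_split:
  assumes "Suc p \<le> m" "r < m choose p"
  shows "rep \<phi> (Suc p) ((m choose Suc p) + r) = \<phi> m (Suc p) + rep \<phi> p r"
proof -
  let ?h = "(m choose Suc p) + r"
  have pos: "0 < ?h" using assms(1) by simp
  have "tp (Suc p) ?h = m" by (rule tp_unique) (use assms(2) in auto)
  then show ?thesis using pos assms(1) by (simp del: binomial_Suc_Suc)
qed

lemma rep_single:
  assumes "Suc p \<le> m"
  shows "rep \<phi> (Suc p) (m choose Suc p) = \<phi> m (Suc p)"
  using rep_split[of p m 0 \<phi>] assms by simp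


declare binomial_Suc_Suc [simp del]

lemma binrep_Suc_top:
  assumes "binrep (Suc n) h (Suc n) f"
  shows "h = (f (Suc n) + Suc n) choose Suc n"
  using assms unfolding binrep_def by simp

lemma binrep_Suc_step:
  assumes "binrep (Suc n) h i f" "i \<le> n"
  shows "binrep n (h - ((f (Suc n) + Suc n) choose Suc n)) i f \<and>
         h = ((f (Suc n) + Suc n) choose Suc n) + (h - ((f (Suc n) + Suc n) choose Suc n)) \<and>
         f n \<le> f (Suc n)"
proof -
  have h: "h = (\<Sum>j=i..Suc n. (f j + j) choose j)" using assms unfolding binrep_def by simp
  have h2: "h = (\<Sum>j=i..n. (f j + j) choose j) + ((f (Suc n) + Suc n) choose Suc n)"
    using h assms(2) by simp
  have mono: "\<forall>j\<in>{i..<n}. f j \<le> f (Suc j)" "f n \<le> f (Suc n)"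
    using assms unfolding binrep_def by auto
  show ?thesis using h2 mono assms unfolding binrep_def by auto
qed

lemma binrep_bound:
  assumes "binrep n h i f"
  shows "h < (Suc (f n + n)) choose n"
  using assms
proof (induction n arbitrary: h)
  case 0 then show ?case unfolding binrep_def by auto
next
  case (Suc n)
  show ?case
  proof (cases "i = Suc n")
    case True
    then have "h = (f (Suc n) + Suc n) choose Suc n" using binrep_Suc_top Suc.prems by simp
    then show ?thesis by (simp add: binomial_Suc_Suc)
  next
    case False
    then have ile: "i \<le> n" using Suc.prems unfolding binrep_def by simp
    note st = binrep_Suc_step[OF Suc.prems ile]
    let ?h' = "h - ((f (Suc n) + Suc n) choose Suc n)"
    have "?h' < Suc (f n + n) choose n" using Suc.IH st by blast
    also have "\<dots> \<le> (f (Suc n) + Suc n) choose n"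
      by (rule binomial_right_mono) (use st in simp)
    finally have "h < ((f (Suc n) + Suc n) choose Suc n) + ((f (Suc n) + Suc n) choose n)"
      using st by linarith
    then show ?thesis by (simp add: binomial_Suc_Suc)
  qed
qed

lemma binrep_rep:
  assumes "binrep n h i f"
  shows "(\<Sum>j=i..n. \<psi> (f j + j) j) = rep \<psi> n h"
  using assms
proof (induction n arbitrary: h)
  case 0 then show ?case unfolding binrep_def by auto
next
  case (Suc n)
  show ?case
  proof (cases "i = Suc n")
    case True
    then have "h = (f (Suc n) + Suc n) choose Suc n" using binrep_Suc_top Suc.prems by simp
    then show ?thesis using True rep_single[of n "f (Suc n) + Suc n" \<psi>] by simp
  next
    case False
    then have ile: "i \<le> n" using Suc.prems unfolding binrep_def by simp
    note st = binrep_Suc_step[OF Suc.prems ile]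
    let ?h' = "h - ((f (Suc n) + Suc n) choose Suc n)"
    have b: "?h' < Suc (f n + n) choose n" using binrep_bound st by blast
    also have "\<dots> \<le> (f (Suc n) + Suc n) choose n"
      by (rule binomial_right_mono) (use st in simp)
    finally have b2: "?h' < (f (Suc n) + Suc n) choose n" .
    have hh: "h = ((f (Suc n) + Suc n) choose Suc n) + ?h'" using st by blast
    have "rep \<psi> (Suc n) h = \<psi> (f (Suc n) + Suc n) (Suc n) + rep \<psi> n ?h'"
      by (subst hh, rule rep_split[OF _ b2]) simp
    also have "rep \<psi> n ?h' = (\<Sum>j=i..n. \<psi> (f j + j) j)" using Suc.IH st by metis
    finally show ?thesis using ile by simp
  qed
qed

lemma binrep_top_le:
  assumes "binrep n h i f"
  shows "(f n + n) choose n \<le> h"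
proof -
  have h: "h = (\<Sum>j=i..n. (f j + j) choose j)" and "i \<le> n" using assms unfolding binrep_def by auto
  then have "n \<in> {i..n}" by simp
  then have "(f n + n) choose n \<le> (\<Sum>j=i..n. (f j + j) choose j)"
    by (intro member_le_sum) auto
  then show ?thesis using h by simp
qed

lemma binrep_exists:
  assumes "1 \<le> n" "0 < h"
  shows "\<exists>i f. binrep n h i f"
  using assms
proof (induction n arbitrary: h)
  case 0 then show ?case by simp
next
  case (Suc n)
  obtain m r where mr: "Suc n \<le> m" "r < m choose n" "h = (m choose Suc n) + r"
    using decomp[OF Suc.prems(2), of n] by blast
  show ?case
  proof (cases "r = 0")
    case True
    define f where "f = (\<lambda>j::nat. m - Suc n)"
    have "binrep (Suc n) h (Suc n) f" unfolding binrep_def f_def using mr True by simp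
    then show ?thesis by blast
  next
    case False
    then have n1: "1 \<le> n" using mr(2) by (cases n) auto
    obtain i f' where bf: "binrep n r i f'" using Suc.IH[OF n1] False by blast
    have "(f' n + n) choose n \<le> r" by (rule binrep_top_le[OF bf])
    then have "(f' n + n) choose n < m choose n" using mr by simp
    then have lt: "f' n + n < m"
      using binomial_right_mono[of m "f' n + n" n] by (meson not_less)
    define f where "f = f'(Suc n := m - Suc n)"
    have iv: "1 \<le> i" "i \<le> n" "\<forall>j\<in>{i..<n}. f' j \<le> f' (Suc j)"
      and rr: "r = (\<Sum>j=i..n. (f' j + j) choose j)" using bf unfolding binrep_def by auto
    have s: "(\<Sum>j=i..n. (f j + j) choose j) = (\<Sum>j=i..n. (f' j + j) choose j)"
      by (rule sum.cong) (auto simp: f_def)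
    have "binrep (Suc n) h i f"
      unfolding binrep_def
    proof (intro conjI)
      show "1 \<le> i" "i \<le> Suc n" using iv by auto
      show "\<forall>j\<in>{i..<Suc n}. f j \<le> f (Suc j)"
      proof
        fix j assume j: "j \<in> {i..<Suc n}"
        show "f j \<le> f (Suc j)"
        proof (cases "j = n")
          case True then show ?thesis using lt by (simp add: f_def)
        next
          case False then show ?thesis using j iv by (simp add: f_def)
        qed
      qed
      show "h = (\<Sum>j=i..Suc n. (f j + j) choose j)"
        using s rr mr iv by (simp add: f_def)
    qed
    then show ?thesis by blast
  qed
qed

definition Gphi :: "nat \<Rightarrow> nat \<Rightarrow> nat" where "Gphi m j = Suc m choose j"

lemma mac_up_rep:
  assumes "1 \<le> n" "0 < h"
  shows "mac_up n h = rep Gphi n h"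
  unfolding mac_up_def
proof (rule the_equality)
  obtain i f where bf: "binrep n h i f" using binrep_exists assms by blast
  have "(\<Sum>j=i..n. Gphi (f j + j) j) = rep Gphi n h" by (rule binrep_rep[OF bf])
  then have "binrep n h i f \<and> rep Gphi n h = (\<Sum>j = i..n. (f j + j + 1) choose j)"
    using bf by (auto simp: Gphi_def)
  then show "\<exists>i f. binrep n h i f \<and> rep Gphi n h = (\<Sum>j = i..n. (f j + j + 1) choose j)"
    by blast
next
  fix v assume "\<exists>i f. binrep n h i f \<and> v = (\<Sum>j = i..n. (f j + j + 1) choose j)"
  then obtain i f where bf: "binrep n h i f" and v: "v = (\<Sum>j = i..n. (f j + j + 1) choose j)" by blast
  have "(\<Sum>j=i..n. Gphi (f j + j) j) = rep Gphi n h" by (rule binrep_rep[OF bf])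
  then show "v = rep Gphi n h" using v by (simp add: Gphi_def)
qed


declare binomial_Suc_Suc [simp del]
declare rep.simps(2) [simp del]

lemma rep_dec:
  assumes "0 < h"
  obtains m r where "Suc p \<le> m" "r < m choose p" "h = (m choose Suc p) + r"
    "\<And>\<phi>. rep \<phi> (Suc p) h = \<phi> m (Suc p) + rep \<phi> p r"
proof -
  obtain m r where mr: "Suc p \<le> m" "r < m choose p" "h = (m choose Suc p) + r"
    using decomp[OF assms] by blast
  have "\<And>\<phi>. rep \<phi> (Suc p) h = \<phi> m (Suc p) + rep \<phi> p r"
    using rep_split[OF mr(1,2)] mr(3) by simp
  then show ?thesis using that mr by blast
qed

lemma rep_cong:
  assumes "\<And>m j. 1 \<le> j \<Longrightarrow> j \<le> p \<Longrightarrow> j \<le> m \<Longrightarrow> \<phi> m j = \<psi> m j"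
  shows "rep \<phi> p h = rep \<psi> p h"
  using assms
proof (induction p arbitrary: h)
  case 0 then show ?case by simp
next
  case (Suc p)
  show ?case
  proof (cases "h = 0")
    case True then show ?thesis by simp
  next
    case False
    then obtain m r where mr: "Suc p \<le> m" "r < m choose p"
      "\<And>\<phi>. rep \<phi> (Suc p) h = \<phi> m (Suc p) + rep \<phi> p r"
      using rep_dec[of h p] by blast
    have "rep \<phi> p r = rep \<psi> p r" using Suc.IH Suc.prems by simp
    moreover have "\<phi> m (Suc p) = \<psi> m (Suc p)" using Suc.prems mr by simp
    ultimately show ?thesis using mr(3) by simp
  qed
qed

lemma rep_sum:
  assumes "finite K"
  shows "rep (\<lambda>m j. \<Sum>k\<in>K. \<phi> k m j) p h = (\<Sum>k\<in>K. rep (\<phi> k) p h)"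
proof (induction p arbitrary: h)
  case 0 then show ?case by simp
next
  case (Suc p)
  show ?case
  proof (cases "h = 0")
    case True then show ?thesis by simp
  next
    case False
    then obtain m r where mr: "Suc p \<le> m" "r < m choose p"
      "\<And>\<phi>. rep \<phi> (Suc p) h = \<phi> m (Suc p) + rep \<phi> p r"
      using rep_dec[of h p] by blast
    show ?thesis using mr(3) Suc.IH by (simp add: sum.distrib)
  qed
qed

lemma rep_cmult:
  "rep (\<lambda>m j. c * \<phi> m j) p h = c * rep \<phi> p h"
proof (induction p arbitrary: h)
  case 0 then show ?case by simp
next
  case (Suc p)
  show ?case
  proof (cases "h = 0")
    case True then show ?thesis by simp
  next
    case False
    then obtain m r where mr: "Suc p \<le> m" "r < m choose p"
      "\<And>\<phi>. rep \<phi> (Suc p) h = \<phi> m (Suc p) + rep \<phi> p r"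
      using rep_dec[of h p] by blast
    show ?thesis using mr(3) Suc.IH by (simp add: algebra_simps)
  qed
qed

lemma rep_zero_fun:
  assumes "\<And>m j. j \<le> p \<Longrightarrow> \<phi> m j = 0"
  shows "rep \<phi> p h = 0"
proof -
  have "rep \<phi> p h = rep (\<lambda>m j. 0 * \<phi> m j) p h" by (rule rep_cong) (use assms in simp)
  also have "\<dots> = 0 * rep \<phi> p h" by (rule rep_cmult)
  finally show ?thesis by simp
qed

lemma rep_id: "rep (\<lambda>m j. m choose j) (Suc p) h = h"
proof (induction p arbitrary: h)
  case 0
  show ?case
  proof (cases "h = 0")
    case True then show ?thesis by simp
  next
    case False
    then obtain m r where mr: "Suc 0 \<le> m" "r < m choose 0" "h = (m choose Suc 0) + r"
      "\<And>\<phi>. rep \<phi> (Suc 0) h = \<phi> m (Suc 0) + rep \<phi> 0 r"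
      using rep_dec[of h 0] by blast
    then show ?thesis by simp
  qed
next
  case (Suc p)
  show ?case
  proof (cases "h = 0")
    case True then show ?thesis by simp
  next
    case False
    then obtain m r where mr: "Suc (Suc p) \<le> m" "r < m choose Suc p" "h = (m choose Suc (Suc p)) + r"
      "\<And>\<phi>. rep \<phi> (Suc (Suc p)) h = \<phi> m (Suc (Suc p)) + rep \<phi> (Suc p) r"
      using rep_dec[of h "Suc p"] by blast
    then show ?thesis using Suc.IH by simp
  qed
qed

lemma rep_G_bound:
  assumes "r < m choose p"
  shows "rep Gphi p r < Suc m choose p"
  using assms
proof (induction p arbitrary: r m)
  case 0 then show ?case by simp
next
  case (Suc p)
  show ?case
  proof (cases "r = 0")
    case True
    then have "Suc p \<le> m" using Suc.prems by simp
    then show ?thesis using True by simp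
  next
    case False
    then obtain m' r' where mr: "Suc p \<le> m'" "r' < m' choose p" "r = (m' choose Suc p) + r'"
      "\<And>\<phi>. rep \<phi> (Suc p) r = \<phi> m' (Suc p) + rep \<phi> p r'"
      using rep_dec[of r p] by blast
    have "m' choose Suc p < m choose Suc p" using mr Suc.prems by simp
    then have "m' < m" using binomial_right_mono[of m m' "Suc p"] by (meson not_less)
    have "rep Gphi (Suc p) r = (Suc m' choose Suc p) + rep Gphi p r'"
      using mr(4) by (simp add: Gphi_def)
    also have "\<dots> < (Suc m' choose Suc p) + (Suc m' choose p)"
      using Suc.IH[OF mr(2)] by simp
    also have "\<dots> = Suc (Suc m') choose Suc p" by (simp add: binomial_Suc_Suc)
    also have "\<dots> \<le> Suc m choose Suc p" by (rule binomial_right_mono) (use \<open>m' < m\<close> in simp)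
    finally show ?thesis .
  qed
qed

lemma rep_comp:
  "rep \<phi> p (rep Gphi p h) = rep (\<lambda>m j. \<phi> (Suc m) j) p h"
proof (induction p arbitrary: h)
  case 0 then show ?case by simp
next
  case (Suc p)
  show ?case
  proof (cases "h = 0")
    case True then show ?thesis by simp
  next
    case False
    then obtain m r where mr: "Suc p \<le> m" "r < m choose p" "h = (m choose Suc p) + r"
      "\<And>\<phi>. rep \<phi> (Suc p) h = \<phi> m (Suc p) + rep \<phi> p r"
      using rep_dec[of h p] by blast
    have g: "rep Gphi (Suc p) h = (Suc m choose Suc p) + rep Gphi p r"
      using mr(4) by (simp add: Gphi_def)
    have b: "rep Gphi p r < Suc m choose p" by (rule rep_G_bound[OF mr(2)])
    have "rep \<phi> (Suc p) (rep Gphi (Suc p) h) = \<phi> (Suc m) (Suc p) + rep \<phi> p (rep Gphi p r)"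
      unfolding g by (rule rep_split[OF _ b]) (use mr in simp)
    also have "rep \<phi> p (rep Gphi p r) = rep (\<lambda>m j. \<phi> (Suc m) j) p r" by (rule Suc.IH)
    finally show ?thesis using mr(4)[of "\<lambda>m j. \<phi> (Suc m) j"] by simp
  qed
qed

lemma rep_G_pos:
  assumes "0 < h" shows "0 < rep Gphi (Suc p) h"
proof -
  obtain m r where mr: "Suc p \<le> m" "r < m choose p" "h = (m choose Suc p) + r"
      "\<And>\<phi>. rep \<phi> (Suc p) h = \<phi> m (Suc p) + rep \<phi> p r"
      using rep_dec[OF assms, of p] by blast
  then show ?thesis by (simp add: Gphi_def)
qed

definition cphi :: "nat \<Rightarrow> nat \<Rightarrow> nat \<Rightarrow> nat" where
  "cphi k m j = (if k \<le> j then (m - k) choose (j - k) else 0)"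

definition vphi :: "nat \<Rightarrow> nat \<Rightarrow> nat \<Rightarrow> nat" where
  "vphi k m j = (m - k) choose j"

definition cnt :: "nat \<Rightarrow> nat \<Rightarrow> nat \<Rightarrow> nat" where
  "cnt k n h = rep (cphi k) n h"

definition VV :: "nat \<Rightarrow> nat \<Rightarrow> nat \<Rightarrow> nat" where
  "VV k p h = rep (vphi k) p h"

lemma hs1: "j \<le> m \<Longrightarrow> (\<Sum>k\<le>j. (m - k) choose (j - k)) = Suc m choose j"
proof (induction j arbitrary: m)
  case 0 then show ?case by simp
next
  case (Suc j)
  then obtain m' where m': "m = Suc m'" by (cases m) auto
  have "(\<Sum>k\<le>Suc j. (m - k) choose (Suc j - k)) = (m choose Suc j) + (\<Sum>k\<le>j. (m' - k) choose (j - k))"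
    by (simp add: sum.atMost_Suc_shift m' del: sum.atMost_Suc)
  also have "\<dots> = (m choose Suc j) + (Suc m' choose j)" using Suc m' by simp
  also have "\<dots> = Suc m choose Suc j" by (simp add: m' binomial_Suc_Suc)
  finally show ?case .
qed

lemma hs2: "j \<le> m \<Longrightarrow> (\<Sum>k\<le>j. Suc k * ((m - k) choose (j - k))) = Suc (Suc m) choose j"
proof (induction j arbitrary: m)
  case 0 then show ?case by simp
next
  case (Suc j)
  then obtain m' where m': "m = Suc m'" by (cases m) auto
  have "(\<Sum>k\<le>Suc j. Suc k * ((m - k) choose (Suc j - k)))
        = (m choose Suc j) + (\<Sum>k\<le>j. Suc (Suc k) * ((m' - k) choose (j - k)))"
    by (simp add: sum.atMost_Suc_shift m' del: sum.atMost_Suc)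
  also have "(\<Sum>k\<le>j. Suc (Suc k) * ((m' - k) choose (j - k)))
      = (\<Sum>k\<le>j. Suc k * ((m' - k) choose (j - k))) + (\<Sum>k\<le>j. ((m' - k) choose (j - k)))"
    by (simp add: sum.distrib)
  also have "\<dots> = (Suc (Suc m') choose j) + (Suc m' choose j)"
    using Suc m' hs1[of j m'] by simp
  also have "(m choose Suc j) + ((Suc (Suc m') choose j) + (Suc m' choose j)) = Suc (Suc m) choose Suc j"
    by (simp add: m' binomial_Suc_Suc)
  finally show ?case .
qed

lemma sum_cphi_cut:
  assumes "j \<le> n"
  shows "(\<Sum>k\<le>n. g k * cphi k m j) = (\<Sum>k\<le>j. g k * ((m - k) choose (j - k)))"
proof -
  have "(\<Sum>k\<le>n. g k * cphi k m j) = (\<Sum>k\<le>j. g k * cphi k m j)"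
    by (rule sum.mono_neutral_right) (use assms in \<open>auto simp: cphi_def\<close>)
  also have "\<dots> = (\<Sum>k\<le>j. g k * ((m - k) choose (j - k)))"
    by (rule sum.cong) (auto simp: cphi_def)
  finally show ?thesis .
qed

lemma G_decomp: "rep Gphi n h = (\<Sum>k\<le>n. cnt k n h)"
proof -
  have "rep Gphi n h = rep (\<lambda>m j. \<Sum>k\<le>n. cphi k m j) n h"
  proof (rule rep_cong)
    fix m j assume "1 \<le> j" "j \<le> n" "j \<le> m"
    then show "Gphi m j = (\<Sum>k\<le>n. cphi k m j)"
      using sum_cphi_cut[of j n "\<lambda>_. 1" m] hs1[of j m] by (simp add: Gphi_def)
  qed
  also have "\<dots> = (\<Sum>k\<le>n. cnt k n h)" unfolding cnt_def by (rule rep_sum) simp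
  finally show ?thesis .
qed

lemma GG_decomp: "rep Gphi n (rep Gphi n h) = (\<Sum>k\<le>n. Suc k * cnt k n h)"
proof -
  have "rep Gphi n (rep Gphi n h) = rep (\<lambda>m j. Gphi (Suc m) j) n h" by (rule rep_comp)
  also have "\<dots> = rep (\<lambda>m j. \<Sum>k\<le>n. Suc k * cphi k m j) n h"
  proof (rule rep_cong)
    fix m j assume "1 \<le> j" "j \<le> n" "j \<le> m"
    then show "Gphi (Suc m) j = (\<Sum>k\<le>n. Suc k * cphi k m j)"
      using sum_cphi_cut[of j n "\<lambda>k. Suc k" m] hs2[of j m] by (simp add: Gphi_def)
  qed
  also have "\<dots> = (\<Sum>k\<le>n. rep (\<lambda>m j. Suc k * cphi k m j) n h)"
    by (rule rep_sum) simp
  also have "\<dots> = (\<Sum>k\<le>n. Suc k * cnt k n h)"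
    by (rule sum.cong) (simp_all only: rep_cmult cnt_def)
  finally show ?thesis .
qed

lemma cnt0: "cnt 0 (Suc p) h = h"
proof -
  have "cnt 0 (Suc p) h = rep (\<lambda>m j. m choose j) (Suc p) h"
    unfolding cnt_def by (rule rep_cong) (simp add: cphi_def)
  then show ?thesis by (simp add: rep_id)
qed


declare binomial_Suc_Suc [simp del]
declare rep.simps(2) [simp del]

lemma cphi_pascal:
  assumes "1 \<le> k" "Suc p \<le> m"
  shows "cphi k (Suc m) (Suc p) = cphi k m (Suc p) + cphi k m p"
proof (cases "k \<le> p")
  case True
  have a: "Suc m - k = Suc (m - k)" "Suc p - k = Suc (p - k)" using True assms by auto
  show ?thesis using True unfolding cphi_def a by (simp add: binomial_Suc_Suc)
next
  case False
  then show ?thesis unfolding cphi_def by auto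
qed

lemma cnt_single:
  assumes "Suc p \<le> m" shows "cnt k (Suc p) (m choose Suc p) = cphi k m (Suc p)"
  unfolding cnt_def by (rule rep_single[OF assms])

lemma VV_single:
  assumes "Suc p \<le> m" shows "VV k (Suc p) (m choose Suc p) = (m - k) choose Suc p"
  unfolding VV_def using rep_single[OF assms] by (simp add: vphi_def)

lemma cnt_split:
  assumes "1 \<le> k" "Suc p \<le> m" "r \<le> m choose p"
  shows "cnt k (Suc p) ((m choose Suc p) + r) = cphi k m (Suc p) + cnt k p r"
proof (cases "r < m choose p")
  case True
  then show ?thesis unfolding cnt_def by (rule rep_split[OF assms(2)])
next
  case False
  then have r: "r = m choose p" using assms by simp
  have e: "(m choose Suc p) + r = Suc m choose Suc p" using r by (simp add: binomial_Suc_Suc)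
  have l: "cnt k (Suc p) ((m choose Suc p) + r) = cphi k (Suc m) (Suc p)"
    unfolding e by (rule cnt_single) (use assms in simp)
  have c: "cnt k p r = cphi k m p"
  proof (cases p)
    case 0
    then show ?thesis using assms(1) by (simp add: cnt_def cphi_def)
  next
    case (Suc q)
    then show ?thesis using r cnt_single[of q m k] assms by simp
  qed
  show ?thesis using l c cphi_pascal[OF assms(1,2)] by simp
qed

lemma VV_split:
  assumes "1 \<le> p" "Suc p \<le> m" "r \<le> m choose p"
  shows "VV k (Suc p) ((m choose Suc p) + r) = ((m - k) choose Suc p) + VV k p r"
proof (cases "r < m choose p")
  case True
  then show ?thesis unfolding VV_def using rep_split[OF assms(2) True] by (simp add: vphi_def)
next
  case False
  then have r: "r = m choose p" using assms by simp
  have e: "(m choose Suc p) + r = Suc m choose Suc p" using r by (simp add: binomial_Suc_Suc)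
  have l: "VV k (Suc p) ((m choose Suc p) + r) = (Suc m - k) choose Suc p"
    unfolding e by (rule VV_single) (use assms in simp)
  obtain q where q: "p = Suc q" using assms(1) by (cases p) auto
  have c: "VV k p r = (m - k) choose p"
    using r VV_single[of q m k] assms q by simp
  have pas: "(Suc m - k) choose Suc p = ((m - k) choose Suc p) + ((m - k) choose p)"
  proof (cases "k \<le> m")
    case True
    then have "Suc m - k = Suc (m - k)" by simp
    then show ?thesis by (simp add: binomial_Suc_Suc)
  next
    case False
    then show ?thesis using q by simp
  qed
  show ?thesis using l c pas by simp
qed

lemma cnt_big_k: "n < k \<Longrightarrow> cnt k n h = 0"
  unfolding cnt_def by (rule rep_zero_fun) (simp add: cphi_def)

lemma VV_zero_gen: "z < (p + k) choose p \<Longrightarrow> VV k p z = 0"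
proof (induction p arbitrary: z)
  case 0 then show ?case by (simp add: VV_def)
next
  case (Suc p)
  show ?case
  proof (cases "z = 0")
    case True then show ?thesis by (simp add: VV_def)
  next
    case False
    then obtain m r where mr: "Suc p \<le> m" "r < m choose p" "z = (m choose Suc p) + r"
      "\<And>\<phi>. rep \<phi> (Suc p) z = \<phi> m (Suc p) + rep \<phi> p r"
      using rep_dec[of z p] by blast
    have "m choose Suc p < (Suc p + k) choose Suc p" using mr Suc.prems by simp
    then have mlt: "m < Suc p + k" using binomial_right_mono[of "Suc p + k" m "Suc p"] by (meson not_less)
    then have v: "vphi k m (Suc p) = 0" unfolding vphi_def by simp
    have "r < (p + k) choose p"
      using mr(2) binomial_right_mono[of m "p + k" p] mlt by simp
    then have "VV k p r = 0" using Suc.IH by simp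
    then show ?thesis using mr(4)[of "vphi k"] v by (simp add: VV_def)
  qed
qed

lemma VV_zero:
  assumes "1 \<le> \<alpha>" "n < k" "z \<le> (\<alpha> + n) choose \<alpha>"
  shows "VV k \<alpha> z = 0"
proof (rule VV_zero_gen)
  obtain a where a: "\<alpha> = Suc a" using assms(1) by (cases \<alpha>) auto
  have "(\<alpha> + n) choose \<alpha> < Suc (\<alpha> + n) choose \<alpha>"
    unfolding a by (simp add: binomial_Suc_Suc)
  also have "\<dots> \<le> (\<alpha> + k) choose \<alpha>" by (rule binomial_right_mono) (use assms in simp)
  finally show "z < (\<alpha> + k) choose \<alpha>" using assms(3) by simp
qed

lemma binom_sym_add: "(a + b) choose a = (a + b) choose b"
  using binomial_symmetric[of a "a + b"] by simp

lemma duality: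
  assumes "1 \<le> k" "k \<le> n" "1 \<le> \<alpha>" "z \<le> (\<alpha> + n) choose n"
  shows "cnt k n (((\<alpha> + n) choose n) - z) + VV k \<alpha> z = (\<alpha> + n - k) choose (n - k)"
  using assms
proof (induction "\<alpha> + n" arbitrary: \<alpha> n z rule: less_induct)
  case less
  obtain n' where n': "n = Suc n'" using less.prems by (cases n) auto
  define L where "L = (\<alpha> + n') choose n'"
  have NL: "(\<alpha> + n) choose n = ((\<alpha> + n') choose Suc n') + L"
    unfolding L_def n' by (simp add: binomial_Suc_Suc)
  show ?case
  proof (cases "z \<le> L")
    case True
    have eq: "((\<alpha> + n) choose n) - z = ((\<alpha> + n') choose Suc n') + (L - z)" using NL True by simp
    have cs0: "cnt k (Suc n') (((\<alpha> + n') choose Suc n') + (L - z)) = cphi k (\<alpha> + n') (Suc n') + cnt k n' (L - z)"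
      by (rule cnt_split) (use less.prems L_def in auto)
    have cs: "cnt k n (((\<alpha> + n) choose n) - z) = cphi k (\<alpha> + n') (Suc n') + cnt k n' (L - z)"
      using cs0 eq n' by simp
    show ?thesis
    proof (cases "k = n")
      case True
      have c0: "cnt k n' (L - z) = 0" by (rule cnt_big_k) (use True n' in simp)
      have v0: "VV k \<alpha> z = 0"
        by (rule VV_zero[of _ n']) (use less.prems True n' \<open>z \<le> L\<close> L_def binom_sym_add[of \<alpha> n'] in auto)
      show ?thesis using cs c0 v0 True n' by (simp add: cphi_def)
    next
      case False
      then have kn': "k \<le> n'" using less.prems n' by simp
      have ih: "cnt k n' (((\<alpha> + n') choose n') - z) + VV k \<alpha> z = (\<alpha> + n' - k) choose (n' - k)"
        by (rule less.hyps) (use less.prems kn' n' \<open>z \<le> L\<close> L_def in auto)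
      have cp: "cphi k (\<alpha> + n') (Suc n') = (\<alpha> + n' - k) choose (Suc n' - k)"
        using kn' by (simp add: cphi_def)
      have a1: "Suc n' - k = Suc (n' - k)" "\<alpha> + n - k = Suc (\<alpha> + n' - k)" "n - k = Suc (n' - k)"
        using kn' n' by auto
      have "cnt k n (((\<alpha> + n) choose n) - z) + VV k \<alpha> z
          = ((\<alpha> + n' - k) choose Suc (n' - k)) + ((\<alpha> + n' - k) choose (n' - k))"
        using cs ih cp a1 L_def by simp
      also have "\<dots> = (\<alpha> + n - k) choose (n - k)" unfolding a1 by (simp add: binomial_Suc_Suc)
      finally show ?thesis .
    qed
  next
    case False
    show ?thesis
    proof (cases "\<alpha> = 1")
      case True
      have N: "(\<alpha> + n) choose n = Suc n" using True by (simp add: binomial_Suc_n)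
      have Lv: "L = n" using True n' L_def by (simp add: binomial_Suc_n)
      have z: "z = Suc n" using False less.prems N Lv by simp
      have v: "VV k \<alpha> z = Suc n - k"
        using VV_single[of 0 "Suc n" k] True z by simp
      have r: "(\<alpha> + n - k) choose (n - k) = Suc n - k"
        using True less.prems by (simp add: Suc_diff_le binomial_Suc_n)
      show ?thesis using N z v r by (simp add: cnt_def)
    next
      case False
      then obtain a where a: "\<alpha> = Suc a" "1 \<le> a" using less.prems by (cases \<alpha>) auto
      define z' where "z' = z - L"
      have Nsplit: "(\<alpha> + n) choose n = L + ((a + n) choose n)"
      proof -
        have "(\<alpha> + n) choose n = Suc (a + n) choose Suc n'" using a n' by simp
        also have "\<dots> = ((a + n) choose n') + ((a + n) choose Suc n')" by (simp add: binomial_Suc_Suc)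
        finally show ?thesis using L_def a n' by simp
      qed
      have z'le: "z' \<le> (a + n) choose n" using less.prems Nsplit z'_def by simp
      have zz: "z = L + z'" using \<open>\<not> z \<le> L\<close> z'_def by simp
      have eq: "((\<alpha> + n) choose n) - z = ((a + n) choose n) - z'" using Nsplit zz by simp
      have ih: "cnt k n (((a + n) choose n) - z') + VV k a z' = (a + n - k) choose (n - k)"
        by (rule less.hyps) (use less.prems a z'le in auto)
      have Lalt: "L = (a + n) choose Suc a"
      proof -
        have "L = (Suc a + n') choose n'" using L_def a by simp
        also have "\<dots> = (Suc a + n') choose Suc a" by (rule binom_sym_add[symmetric, of "Suc a" n', THEN sym, symmetric])
        finally show ?thesis using n' by simp
      qed
      have z'le2: "z' \<le> (a + n) choose a" using z'le binom_sym_add[of a n] by simp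
      have vs: "VV k \<alpha> z = ((a + n - k) choose Suc a) + VV k a z'"
        unfolding zz Lalt a(1) by (rule VV_split) (use a n' z'le2 in auto)
      have fin: "((a + n - k) choose (n - k)) + ((a + n - k) choose Suc a) = (\<alpha> + n - k) choose (n - k)"
      proof (cases "k = n")
        case True
        then show ?thesis using a by simp
      next
        case False
        then have kn': "k \<le> n'" using less.prems n' by simp
        have s1: "(a + n - k) choose Suc a = (a + n - k) choose (n' - k)"
        proof -
          have "a + n - k = Suc a + (n' - k)" using kn' n' by simp
          then show ?thesis using binom_sym_add[of "Suc a" "n' - k"] by simp
        qed
        have s2: "n - k = Suc (n' - k)" "\<alpha> + n - k = Suc (a + n - k)" using kn' n' a by auto
        show ?thesis unfolding s1 s2 by (simp add: binomial_Suc_Suc)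
      qed
      show ?thesis using eq ih vs fin by simp
    qed
  qed
qed


declare binomial_Suc_Suc [simp del]
declare rep.simps(2) [simp del]

definition Q1 :: "nat \<Rightarrow> nat \<Rightarrow> nat \<Rightarrow> bool" where
  "Q1 k n \<alpha> \<longleftrightarrow> (\<forall>x y. x + y \<le> (\<alpha> + n) choose n \<longrightarrow> cnt k n (x + y) \<le> cnt k n x + cnt k n y)"

definition Q2 :: "nat \<Rightarrow> nat \<Rightarrow> nat \<Rightarrow> bool" where
  "Q2 k n \<alpha> \<longleftrightarrow> (\<forall>x y. x + y \<le> (\<alpha> + n) choose \<alpha> \<longrightarrow> VV k \<alpha> x + VV k \<alpha> y \<le> VV k \<alpha> (x + y))"

lemma cnt_0 [simp]: "cnt k n 0 = 0" by (simp add: cnt_def)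
lemma VV_0 [simp]: "VV k p 0 = 0" by (simp add: VV_def)

lemma BOX:
  assumes k: "1 \<le> k" "k \<le> n" and a: "1 \<le> \<alpha>" and q: "Q2 k n \<alpha>"
    and xy: "x \<le> (\<alpha> + n) choose n" "y \<le> (\<alpha> + n) choose n" "x + y = ((\<alpha> + n) choose n) + s"
  shows "cnt k n ((\<alpha> + n) choose n) + cnt k n s \<le> cnt k n x + cnt k n y"
proof -
  let ?N = "(\<alpha> + n) choose n"
  let ?D = "(\<alpha> + n - k) choose (n - k)"
  have s: "s \<le> ?N" using xy by simp
  have dN: "cnt k n ?N = ?D" using duality[OF k a, of 0] by simp
  have dx: "cnt k n x + VV k \<alpha> (?N - x) = ?D" using duality[OF k a, of "?N - x"] xy by simp
  have dy: "cnt k n y + VV k \<alpha> (?N - y) = ?D" using duality[OF k a, of "?N - y"] xy by simp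
  have ds: "cnt k n s + VV k \<alpha> (?N - s) = ?D" using duality[OF k a, of "?N - s"] s by simp
  have sum: "(?N - x) + (?N - y) = ?N - s" using xy by simp
  have "(?N - x) + (?N - y) \<le> (\<alpha> + n) choose \<alpha>" using sum binom_sym_add[of \<alpha> n] by simp
  then have "VV k \<alpha> (?N - x) + VV k \<alpha> (?N - y) \<le> VV k \<alpha> (?N - s)"
    using q sum unfolding Q2_def by metis
  then show ?thesis using dN dx dy ds by linarith
qed

lemma BOXV:
  assumes k: "1 \<le> k" "k \<le> n" and a: "1 \<le> \<alpha>" and q: "Q1 k n \<alpha>"
    and xy: "x \<le> (\<alpha> + n) choose n" "y \<le> (\<alpha> + n) choose n" "x + y = ((\<alpha> + n) choose n) + s"
  shows "VV k \<alpha> x + VV k \<alpha> y \<le> VV k \<alpha> ((\<alpha> + n) choose n) + VV k \<alpha> s"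
proof -
  let ?N = "(\<alpha> + n) choose n"
  let ?D = "(\<alpha> + n - k) choose (n - k)"
  have s: "s \<le> ?N" using xy by simp
  have dN: "VV k \<alpha> ?N = ?D" using duality[OF k a, of ?N] by simp
  have dx: "cnt k n (?N - x) + VV k \<alpha> x = ?D" using duality[OF k a, of x] xy by simp
  have dy: "cnt k n (?N - y) + VV k \<alpha> y = ?D" using duality[OF k a, of y] xy by simp
  have ds: "cnt k n (?N - s) + VV k \<alpha> s = ?D" using duality[OF k a, of s] s by simp
  have sum: "(?N - x) + (?N - y) = ?N - s" using xy by simp
  have "cnt k n (?N - s) \<le> cnt k n (?N - x) + cnt k n (?N - y)"
    using q sum unfolding Q1_def by (metis diff_le_self)
  then show ?thesis using dN dx dy ds by linarith
qed

lemma CLP_cnt: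
  assumes k: "1 \<le> k" and q: "Q1 k n' \<alpha>"
  shows "y \<le> (\<alpha> + n') choose n' \<Longrightarrow> cnt k n' y \<le> cnt k (Suc n') y"
proof (induction y rule: less_induct)
  case (less y)
  show ?case
  proof (cases "y = 0")
    case True then show ?thesis by simp
  next
    case False
    then obtain m r where mr: "Suc n' \<le> m" "r < m choose n'" "y = (m choose Suc n') + r"
      "\<And>\<phi>. rep \<phi> (Suc n') y = \<phi> m (Suc n') + rep \<phi> n' r"
      using rep_dec[of y n'] by blast
    have cy: "cnt k (Suc n') y = cphi k m (Suc n') + cnt k n' r" using mr(4) by (simp add: cnt_def)
    show ?thesis
    proof (cases "r = 0")
      case False
      have lt: "(m choose Suc n') < y" using mr False by simp
      have ih: "cnt k n' (m choose Suc n') \<le> cnt k (Suc n') (m choose Suc n')"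
        using less.IH[OF lt] lt less.prems by simp
      have "cnt k n' y \<le> cnt k n' (m choose Suc n') + cnt k n' r"
        using q less.prems mr(3) unfolding Q1_def by metis
      then show ?thesis using ih cy cnt_single[OF mr(1)] by simp
    next
      case True
      show ?thesis
      proof (cases "m = Suc n'")
        case True
        have y1: "y = 1" using mr \<open>r = 0\<close> True by simp
        show ?thesis
        proof (cases n')
          case 0 then show ?thesis by (simp add: cnt_def)
        next
          case (Suc q)
          have "cnt k n' 1 = cphi k n' n'" using cnt_single[of q "Suc q" k] Suc by simp
          moreover have "cnt k (Suc n') 1 = cphi k (Suc n') (Suc n')"
            using cnt_single[of n' "Suc n'" k] by simp
          ultimately show ?thesis using y1 by (simp add: cphi_def)
        qed
      next
        case False
        then obtain m' where m': "m = Suc m'" "Suc n' \<le> m'" using mr(1) by (cases m) auto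
        have ysp: "y = (m' choose Suc n') + (m' choose n')"
          using mr(3) \<open>r = 0\<close> m' by (simp add: binomial_Suc_Suc)
        have cs: "cnt k (Suc n') y = cphi k m' (Suc n') + cnt k n' (m' choose n')"
          unfolding ysp by (rule cnt_split[OF k m'(2)]) simp
        have lt: "(m' choose Suc n') < y" using ysp m' by simp
        have ih: "cnt k n' (m' choose Suc n') \<le> cnt k (Suc n') (m' choose Suc n')"
          using less.IH[OF lt] lt less.prems by simp
        have "cnt k n' y \<le> cnt k n' (m' choose Suc n') + cnt k n' (m' choose n')"
          using q less.prems ysp unfolding Q1_def by metis
        then show ?thesis using ih cs cnt_single[OF m'(2)] by simp
      qed
    qed
  qed
qed

lemma CLP_V:
  assumes k: "1 \<le> k" and a: "1 \<le> a" and q: "Q2 k n a"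
  shows "y \<le> (a + n) choose a \<Longrightarrow> VV k (Suc a) y \<le> VV k a y"
proof (induction y rule: less_induct)
  case (less y)
  show ?case
  proof (cases "y = 0")
    case True then show ?thesis by simp
  next
    case False
    then obtain m r where mr: "Suc a \<le> m" "r < m choose a" "y = (m choose Suc a) + r"
      "\<And>\<phi>. rep \<phi> (Suc a) y = \<phi> m (Suc a) + rep \<phi> a r"
      using rep_dec[of y a] by blast
    have cy: "VV k (Suc a) y = ((m - k) choose Suc a) + VV k a r" using mr(4) by (simp add: VV_def vphi_def)
    show ?thesis
    proof (cases "r = 0")
      case False
      have lt: "(m choose Suc a) < y" using mr False by simp
      have ih: "VV k (Suc a) (m choose Suc a) \<le> VV k a (m choose Suc a)"
        using less.IH[OF lt] lt less.prems by simp
      have "VV k a (m choose Suc a) + VV k a r \<le> VV k a y"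
        using q less.prems mr(3) unfolding Q2_def by metis
      then show ?thesis using ih cy VV_single[OF mr(1)] by simp
    next
      case True
      show ?thesis
      proof (cases "m = Suc a")
        case True
        then have "VV k (Suc a) y = 0" using k cy \<open>r = 0\<close> by simp
        then show ?thesis by simp
      next
        case False
        then obtain m' where m': "m = Suc m'" "Suc a \<le> m'" using mr(1) by (cases m) auto
        have ysp: "y = (m' choose Suc a) + (m' choose a)"
          using mr(3) \<open>r = 0\<close> m' by (simp add: binomial_Suc_Suc)
        have cs: "VV k (Suc a) y = ((m' - k) choose Suc a) + VV k a (m' choose a)"
          unfolding ysp by (rule VV_split[OF a m'(2)]) simp
        have lt: "(m' choose Suc a) < y" using ysp m' by simp
        have ih: "VV k (Suc a) (m' choose Suc a) \<le> VV k a (m' choose Suc a)"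
          using less.IH[OF lt] lt less.prems by simp
        have "VV k a (m' choose Suc a) + VV k a (m' choose a) \<le> VV k a y"
          using q less.prems ysp unfolding Q2_def by metis
        then show ?thesis using ih cs VV_single[OF m'(2)] by simp
      qed
    qed
  qed
qed

lemma VV1: "VV k (Suc 0) h = h - k"
proof (cases "h = 0")
  case True then show ?thesis by simp
next
  case False
  then have "Suc 0 \<le> h" by simp
  then show ?thesis using VV_single[of 0 h k] by simp
qed


declare binomial_Suc_Suc [simp del]
declare rep.simps(2) [simp del]

lemma binom_top_bound:
  assumes "(m choose p) \<le> x" "x < (M choose p)"
  shows "m < M"
  using assms binomial_right_mono[of M m p] by (meson le_trans not_less)

lemma Q_all:
  assumes k: "1 \<le> k"
  shows "Q1 k n \<alpha> \<and> Q2 k n \<alpha>"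
proof (induction "n + \<alpha>" arbitrary: n \<alpha> rule: less_induct)
  case less
  have IH1: "\<And>n' \<alpha>'. n' + \<alpha>' < n + \<alpha> \<Longrightarrow> Q1 k n' \<alpha>'" using less by blast
  have IH2: "\<And>n' \<alpha>'. n' + \<alpha>' < n + \<alpha> \<Longrightarrow> Q2 k n' \<alpha>'" using less by blast
  let ?B = "(\<alpha> + n) choose n"
  have q1: "Q1 k n \<alpha>"
  proof (cases "n = 0 \<or> n < k \<or> \<alpha> = 0")
    case True
    show ?thesis unfolding Q1_def
    proof (intro allI impI)
      fix x y assume xy: "x + y \<le> ?B"
      show "cnt k n (x + y) \<le> cnt k n x + cnt k n y"
      proof (cases "n = 0 \<or> n < k")
        case True then show ?thesis using cnt_big_k[of n k] by (auto simp: cnt_def)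
      next
        case False
        then have "\<alpha> = 0" using \<open>n = 0 \<or> n < k \<or> \<alpha> = 0\<close> by simp
        then have "x = 0 \<or> y = 0" using xy by auto
        then show ?thesis by auto
      qed
    qed
  next
    case False
    then obtain n' where n': "n = Suc n'" and kn: "k \<le> n" and a1: "1 \<le> \<alpha>" by (cases n) auto
    have Q1n': "Q1 k n' \<alpha>" by (rule IH1) (use n' in simp)
    have main: "\<And>x. y \<le> x \<Longrightarrow> x + y \<le> ?B \<Longrightarrow> cnt k n (x + y) \<le> cnt k n x + cnt k n y" for y
    proof (induction y rule: less_induct)
      case (less y)
      fix x assume yx: "y \<le> x" and xyB: "x + y \<le> ?B"
      show "cnt k n (x + y) \<le> cnt k n x + cnt k n y"
      proof (cases "y = 0")
        case True then show ?thesis by simp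
      next
        case False
        then have "0 < x" using yx by simp
        then obtain m r where mr: "Suc n' \<le> m" "r < m choose n'" "x = (m choose Suc n') + r"
          "\<And>\<phi>. rep \<phi> (Suc n') x = \<phi> m (Suc n') + rep \<phi> n' r"
          using rep_dec[of x n'] by blast
        have cx: "cnt k n x = cphi k m n + cnt k n' r" using mr(4) n' by (simp add: cnt_def)
        have "m < \<alpha> + n"
          by (rule binom_top_bound[of m n x]) (use mr n' xyB False in auto)
        then have mle: "m \<le> \<alpha> + n'" using n' by simp
        show ?thesis
        proof (cases "x + y \<le> Suc m choose n")
          case True
          have ry: "r + y \<le> m choose n'"
            using True mr(3) n' by (simp add: binomial_Suc_Suc)
          have cxy: "cnt k n (x + y) = cphi k m n + cnt k n' (r + y)"
            using cnt_split[OF k mr(1) ry] mr(3) n' by (simp add: add.assoc)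
          have b1: "m choose n' \<le> (\<alpha> + n') choose n'" by (rule binomial_right_mono[OF mle])
          have "cnt k n' (r + y) \<le> cnt k n' r + cnt k n' y"
            using Q1n' ry b1 unfolding Q1_def by simp
          moreover have "cnt k n' y \<le> cnt k n y"
            using CLP_cnt[OF k Q1n', of y] ry b1 n' by simp
          ultimately show ?thesis using cx cxy by simp
        next
          case False
          define a' where "a' = m - n'"
          have a'n: "a' + n = Suc m" using a'_def mr(1) n' by simp
          have a'1: "1 \<le> a'" using a'_def mr(1) by simp
          have "Suc m < \<alpha> + n"
          proof (rule ccontr)
            assume "\<not> Suc m < \<alpha> + n"
            then have "?B \<le> Suc m choose n" by (intro binomial_right_mono) simp
            then show False using False xyB by simp
          qed
          then have a'lt: "a' + n < \<alpha> + n" using a'n by simp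
          let ?N1 = "(a' + n) choose n"
          have xN: "x < ?N1" using mr(2,3) a'n n' by (simp add: binomial_Suc_Suc)
          define s where "s = x + y - ?N1"
          have xys: "x + y = ?N1 + s" using False a'n s_def by simp
          have sy: "s < y" using xN xys by simp
          have box: "cnt k n ?N1 + cnt k n s \<le> cnt k n x + cnt k n y"
            by (rule BOX[OF k kn a'1 IH2]) (use a'lt xN yx xys in auto)
          have "cnt k n (?N1 + s) \<le> cnt k n ?N1 + cnt k n s"
            using less.IH[OF sy, of ?N1] sy xN yx xys xyB by simp
          then show ?thesis using box xys by simp
        qed
      qed
    qed
    show ?thesis unfolding Q1_def
    proof (intro allI impI)
      fix x y assume xy: "x + y \<le> ?B"
      show "cnt k n (x + y) \<le> cnt k n x + cnt k n y"
      proof (cases "y \<le> x")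
        case True then show ?thesis using main xy by blast
      next
        case False
        then have "cnt k n (y + x) \<le> cnt k n y + cnt k n x" using main[of x y] xy by simp
        then show ?thesis by (simp add: add.commute)
      qed
    qed
  qed
  let ?C = "(\<alpha> + n) choose \<alpha>"
  have q2: "Q2 k n \<alpha>"
  proof (cases "\<alpha> = 0 \<or> n = 0")
    case True
    show ?thesis unfolding Q2_def
    proof (intro allI impI)
      fix x y assume xy: "x + y \<le> ?C"
      show "VV k \<alpha> x + VV k \<alpha> y \<le> VV k \<alpha> (x + y)"
      proof (cases "\<alpha> = 0")
        case True then show ?thesis by (simp add: VV_def)
      next
        case False
        then have "n = 0" using \<open>\<alpha> = 0 \<or> n = 0\<close> by simp
        then have "x = 0 \<or> y = 0" using xy by auto
        then show ?thesis by auto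
      qed
    qed
  next
    case False
    then have a1: "1 \<le> \<alpha>" and n1: "1 \<le> n" by auto
    show ?thesis
    proof (cases "\<alpha> = 1 \<or> n < k")
      case True
      show ?thesis unfolding Q2_def
      proof (intro allI impI)
        fix x y assume xy: "x + y \<le> ?C"
        show "VV k \<alpha> x + VV k \<alpha> y \<le> VV k \<alpha> (x + y)"
        proof (cases "\<alpha> = 1")
          case True then show ?thesis by (simp add: VV1)
        next
          case False
          then have nk: "n < k" using \<open>\<alpha> = 1 \<or> n < k\<close> by simp
          have "VV k \<alpha> x = 0" "VV k \<alpha> y = 0" "VV k \<alpha> (x + y) = 0"
            using VV_zero[OF a1 nk] xy by auto
          then show ?thesis by simp
        qed
      qed
    next
      case False
      then obtain a where a: "\<alpha> = Suc a" "1 \<le> a" and kn: "k \<le> n" using a1 by (cases \<alpha>) auto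
      have Q2a: "Q2 k n a" by (rule IH2) (use a in simp)
      have main: "\<And>x. y \<le> x \<Longrightarrow> x + y \<le> ?C \<Longrightarrow> VV k \<alpha> x + VV k \<alpha> y \<le> VV k \<alpha> (x + y)" for y
      proof (induction y rule: less_induct)
        case (less y)
        fix x assume yx: "y \<le> x" and xyB: "x + y \<le> ?C"
        show "VV k \<alpha> x + VV k \<alpha> y \<le> VV k \<alpha> (x + y)"
        proof (cases "y = 0")
          case True then show ?thesis by simp
        next
          case False
          then have "0 < x" using yx by simp
          then obtain m r where mr: "Suc a \<le> m" "r < m choose a" "x = (m choose Suc a) + r"
            "\<And>\<phi>. rep \<phi> (Suc a) x = \<phi> m (Suc a) + rep \<phi> a r"
            using rep_dec[of x a] by blast
          have vx: "VV k \<alpha> x = ((m - k) choose \<alpha>) + VV k a r"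
            using mr(4) a by (simp add: VV_def vphi_def)
          have "m < \<alpha> + n"
            by (rule binom_top_bound[of m \<alpha> x]) (use mr a xyB False in auto)
          then have mle: "m \<le> a + n" using a by simp
          show ?thesis
          proof (cases "x + y \<le> Suc m choose \<alpha>")
            case True
            have ry: "r + y \<le> m choose a"
              using True mr(3) a by (simp add: binomial_Suc_Suc)
            have vxy: "VV k \<alpha> (x + y) = ((m - k) choose \<alpha>) + VV k a (r + y)"
              using VV_split[OF a(2) mr(1) ry, of k] mr(3) a by (simp add: add.assoc)
            have b1: "m choose a \<le> (a + n) choose a" by (rule binomial_right_mono[OF mle])
            have "VV k a r + VV k a y \<le> VV k a (r + y)"
              using Q2a ry b1 unfolding Q2_def by simp
            moreover have "VV k \<alpha> y \<le> VV k a y"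
              using CLP_V[OF k a(2) Q2a, of y] ry b1 a by simp
            ultimately show ?thesis using vx vxy by simp
          next
            case False
            define n2 where "n2 = m - a"
            have an2: "\<alpha> + n2 = Suc m" using n2_def mr(1) a by simp
            have n21: "1 \<le> n2" using n2_def mr(1) by simp
            have "Suc m < \<alpha> + n"
            proof (rule ccontr)
              assume "\<not> Suc m < \<alpha> + n"
              then have "?C \<le> Suc m choose \<alpha>" by (intro binomial_right_mono) simp
              then show False using False xyB by simp
            qed
            then have n2lt: "n2 + \<alpha> < n + \<alpha>" using an2 by simp
            let ?N1 = "(\<alpha> + n2) choose n2"
            have N1eq: "?N1 = Suc m choose \<alpha>" using binom_sym_add[of \<alpha> n2] an2 by simp
            have xN: "x < ?N1" using mr(2,3) a N1eq by (simp add: binomial_Suc_Suc)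
            define s where "s = x + y - ?N1"
            have xys: "x + y = ?N1 + s" using False N1eq s_def by simp
            have sy: "s < y" using xN xys by simp
            have box: "VV k \<alpha> x + VV k \<alpha> y \<le> VV k \<alpha> ?N1 + VV k \<alpha> s"
            proof (cases "k \<le> n2")
              case True
              show ?thesis by (rule BOXV[OF k True a1 IH1[OF n2lt]]) (use xN yx xys in auto)
            next
              case False
              then have nk: "n2 < k" by simp
              have "?N1 = (\<alpha> + n2) choose \<alpha>" using binom_sym_add[of \<alpha> n2] by simp
              then have "VV k \<alpha> x = 0" "VV k \<alpha> y = 0"
                using VV_zero[OF a1 nk, of x] VV_zero[OF a1 nk, of y] xN yx by auto
              then show ?thesis by simp
            qed
            have "VV k \<alpha> ?N1 + VV k \<alpha> s \<le> VV k \<alpha> (?N1 + s)"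
              using less.IH[OF sy, of ?N1] sy xN yx xys xyB by simp
            then show ?thesis using box xys by simp
          qed
        qed
      qed
      show ?thesis unfolding Q2_def
      proof (intro allI impI)
        fix x y assume xy: "x + y \<le> ?C"
        show "VV k \<alpha> x + VV k \<alpha> y \<le> VV k \<alpha> (x + y)"
        proof (cases "y \<le> x")
          case True then show ?thesis using main xy by blast
        next
          case False
          then have "VV k \<alpha> y + VV k \<alpha> x \<le> VV k \<alpha> (y + x)" using main[of x y] xy by simp
          then show ?thesis by (simp add: add.commute)
        qed
      qed
    qed
  qed
  show ?case using q1 q2 by simp
qed


declare binomial_Suc_Suc [simp del]
declare rep.simps(2) [simp del]

theorem lemma1p6:
  fixes n a b c \<alpha> :: nat
  assumes "n > 0" and "a > 0" and "b > 0" and "c > 0" and "\<alpha> > 0"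
    and "((\<alpha> + n) choose n) + a = b + c"
    and "a < ((\<alpha> + n) choose n)" and "b < ((\<alpha> + n) choose n)" and "c < ((\<alpha> + n) choose n)"
  shows "mac_up n ((\<alpha> + n) choose n) + mac_up n a \<le> mac_up n b + mac_up n c \<and>
         (mac_up n ((\<alpha> + n) choose n) + mac_up n a = mac_up n b + mac_up n c \<longrightarrow>
         mac_up n (mac_up n ((\<alpha> + n) choose n)) + mac_up n (mac_up n a)
           = mac_up n (mac_up n b) + mac_up n (mac_up n c))"
proof -
  let ?N = "(\<alpha> + n) choose n"
  obtain p where p: "n = Suc p" using assms(1) by (cases n) auto
  have n1: "1 \<le> n" and a1: "1 \<le> \<alpha>" using assms by auto
  have Npos: "0 < ?N" by simp
  have M1: "\<And>h. 0 < h \<Longrightarrow> mac_up n h = rep Gphi n h" using mac_up_rep[OF n1] by blast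
  have M2: "\<And>h. 0 < h \<Longrightarrow> mac_up n (mac_up n h) = rep Gphi n (rep Gphi n h)"
    using M1 rep_G_pos p by simp
  have ineq: "\<And>k. k \<le> n \<Longrightarrow> cnt k n ?N + cnt k n a \<le> cnt k n b + cnt k n c"
  proof -
    fix k assume kn: "k \<le> n"
    show "cnt k n ?N + cnt k n a \<le> cnt k n b + cnt k n c"
    proof (cases "k = 0")
      case True then show ?thesis using assms(6) p by (simp add: cnt0)
    next
      case False
      then have k1: "1 \<le> k" by simp
      have q: "Q2 k n \<alpha>" using Q_all[OF k1] by blast
      show ?thesis using BOX[OF k1 kn a1 q, of b c a] assms by simp
    qed
  qed
  have G: "\<And>h. rep Gphi n h = (\<Sum>k\<le>n. cnt k n h)" by (rule G_decomp)
  have GG: "\<And>h. rep Gphi n (rep Gphi n h) = (\<Sum>k\<le>n. Suc k * cnt k n h)" by (rule GG_decomp)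
  have lhs: "mac_up n ?N + mac_up n a = (\<Sum>k\<le>n. cnt k n ?N + cnt k n a)"
    using M1[OF Npos] M1[OF assms(2)] G by (simp add: sum.distrib)
  have rhs: "mac_up n b + mac_up n c = (\<Sum>k\<le>n. cnt k n b + cnt k n c)"
    using M1[OF assms(3)] M1[OF assms(4)] G by (simp add: sum.distrib)
  have part1: "mac_up n ?N + mac_up n a \<le> mac_up n b + mac_up n c"
    unfolding lhs rhs by (rule sum_mono) (use ineq in simp)
  have part2: "mac_up n (mac_up n ?N) + mac_up n (mac_up n a)
           = mac_up n (mac_up n b) + mac_up n (mac_up n c)"
    if eq: "mac_up n ?N + mac_up n a = mac_up n b + mac_up n c"
  proof -
    have eqs: "(\<Sum>k\<le>n. cnt k n ?N + cnt k n a) = (\<Sum>k\<le>n. cnt k n b + cnt k n c)"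
      using eq lhs rhs by simp
    have each: "\<And>k. k \<le> n \<Longrightarrow> cnt k n ?N + cnt k n a = cnt k n b + cnt k n c"
      using sum_mono_inv[OF eqs] ineq by simp
    have "mac_up n (mac_up n ?N) + mac_up n (mac_up n a) = (\<Sum>k\<le>n. Suc k * (cnt k n ?N + cnt k n a))"
      using M2[OF Npos] M2[OF assms(2)] GG by (simp add: sum.distrib algebra_simps)
    also have "\<dots> = (\<Sum>k\<le>n. Suc k * (cnt k n b + cnt k n c))"
      by (rule sum.cong) (use each in simp_all)
    also have "\<dots> = mac_up n (mac_up n b) + mac_up n (mac_up n c)"
      using M2[OF assms(3)] M2[OF assms(4)] GG by (simp add: sum.distrib algebra_simps)
    finally show ?thesis .
  qed
  show ?thesis using part1 part2 by blast
qed

end
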